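(* Let $G=(V,E)$ be a graph with infinite edge motion and let $\gamma \in \operatorname{Aut} G$. Let $V_{\text{move}} = \{v \in V : \gamma(v) \neq v\}$, and let $C$ be the vertex set of a connected component of the induced subgraph $G[V_{\text{move}}]$. If $C$ is finite, then $C$ contains a vertex of infinite degree in $G$.
   Context: Graphs are simple and may be infinite. An automorphism $\gamma$ acts on edges by $\gamma(uv)=\gamma(u)\gamma(v)$; it moves an edge $e$ if $\gamma(e)\neq e$ as an unordered pair. A graph has infinite edge motion if every non-trivial automorphism moves infinitely many edges. *)

theory Defs
  imports Main
begin

definition simple_graph :: "'a set \<Rightarrow> 'a set set \<Rightarrow> bool" where
  "simple_graph V E \<longleftrightarrow> (\<forall>e\<in>E. e \<subseteq> V \<and> card e = 2)"

definition graph_aut :: "'a set \<Rightarrow> 'a set set \<Rightarrow> ('a \<Rightarrow> 'a) \<Rightarrow> bool" where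
  "graph_aut V E g \<longleftrightarrow> bij_betw g V V \<and>
     (\<forall>u\<in>V. \<forall>v\<in>V. {u, v} \<in> E \<longleftrightarrow> {g u, g v} \<in> E)"

definition moved_edges :: "'a set set \<Rightarrow> ('a \<Rightarrow> 'a) \<Rightarrow> 'a set set" where
  "moved_edges E g = {e \<in> E. g ` e \<noteq> e}"

definition infinite_edge_motion :: "'a set \<Rightarrow> 'a set set \<Rightarrow> bool" where
  "infinite_edge_motion V E \<longleftrightarrow>
     (\<forall>g. graph_aut V E g \<and> (\<exists>v\<in>V. g v \<noteq> v) \<longrightarrow> infinite (moved_edges E g))"

definition induced_adj :: "'a set set \<Rightarrow> 'a set \<Rightarrow> 'a \<Rightarrow> 'a \<Rightarrow> bool" where
  "induced_adj E S x y \<longleftrightarrow> x \<in> S \<and> y \<in> S \<and> {x, y} \<in> E"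

definition is_component :: "'a set set \<Rightarrow> 'a set \<Rightarrow> 'a set \<Rightarrow> bool" where
  "is_component E S C \<longleftrightarrow> (\<exists>u\<in>S. C = {w. (induced_adj E S)\<^sup>*\<^sup>* u w})"

definition degree_set :: "'a set \<Rightarrow> 'a set set \<Rightarrow> 'a \<Rightarrow> 'a set" where
  "degree_set V E v = {w \<in> V. {v, w} \<in> E}"

end

theory Submission
  imports Defs
begin

lemma rtranclp_sym_rev:
  assumes "\<And>x y. R x y \<Longrightarrow> R y x" and "R\<^sup>*\<^sup>* x y" shows "R\<^sup>*\<^sup>* y x"
  using assms(2)
proof induction
  case base then show ?case by simp
next
  case (step y z)
  then show ?case using assms(1) by (meson converse_rtranclp_into_rtranclp)
qed

theorem mainTheorem1:
  fixes V :: "'a set" and E :: "'a set set" and g :: "'a \<Rightarrow> 'a" and C :: "'a set"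
  assumes "simple_graph V E"
    and "infinite_edge_motion V E"
    and "graph_aut V E g"
    and "is_component E {v \<in> V. g v \<noteq> v} C"
    and "finite C"
  shows "\<exists>v\<in>C. infinite (degree_set V E v)"
proof (rule ccontr)
  assume nc: "\<not> (\<exists>v\<in>C. infinite (degree_set V E v))"
  define M where "M = {v \<in> V. g v \<noteq> v}"
  define R where "R = induced_adj E M"
  define D where "D = g ` C"
  have bij: "bij_betw g V V" and adj: "\<And>u v. u \<in> V \<Longrightarrow> v \<in> V \<Longrightarrow> {u, v} \<in> E \<longleftrightarrow> {g u, g v} \<in> E"
    using assms(3) unfolding graph_aut_def by auto
  have inj: "inj_on g V" and gV: "g ` V = V" using bij by (auto simp: bij_betw_def)
  have Esub: "\<And>e. e \<in> E \<Longrightarrow> e \<subseteq> V" and Ecard: "\<And>e. e \<in> E \<Longrightarrow> card e = 2"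
    using assms(1) unfolding simple_graph_def by auto
  obtain u where uM: "u \<in> M" and Cdef: "C = {w. R\<^sup>*\<^sup>* u w}"
    using assms(4) unfolding is_component_def M_def R_def by auto
  have uC: "u \<in> C" using Cdef by simp
  have Rsym: "\<And>x y. R x y \<Longrightarrow> R y x" unfolding R_def induced_adj_def by (auto simp: insert_commute)
  have CM: "C \<subseteq> M"
  proof
    fix w assume "w \<in> C"
    then have "R\<^sup>*\<^sup>* u w" using Cdef by simp
    then show "w \<in> M" using uM by induction (auto simp: R_def induced_adj_def)
  qed
  have CV: "C \<subseteq> V" using CM M_def by auto
  have closure: "\<And>c w. c \<in> C \<Longrightarrow> w \<in> M \<Longrightarrow> {c, w} \<in> E \<Longrightarrow> w \<in> C"
  proof -
    fix c w assume "c \<in> C" "w \<in> M" "{c, w} \<in> E"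
    then have "R c w" using CM unfolding R_def induced_adj_def by auto
    moreover have "R\<^sup>*\<^sup>* u c" using \<open>c \<in> C\<close> Cdef by simp
    ultimately show "w \<in> C" using Cdef by (simp add: rtranclp.rtrancl_into_rtrancl)
  qed
  have F1: "\<And>c w. c \<in> C \<Longrightarrow> w \<in> V \<Longrightarrow> {c, w} \<in> E \<Longrightarrow> w \<notin> C \<Longrightarrow> g w = w"
    using closure M_def by blast
  have gM: "\<And>x. x \<in> M \<Longrightarrow> g x \<in> M"
  proof -
    fix x assume "x \<in> M"
    then have xV: "x \<in> V" and "g x \<noteq> x" using M_def by auto
    have gxV: "g x \<in> V" using xV gV by auto
    have "g (g x) \<noteq> g x" using inj xV gxV \<open>g x \<noteq> x\<close> by (metis inj_onD)
    then show "g x \<in> M" using gxV M_def by auto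
  qed
  have Rg: "\<And>x y. R x y \<Longrightarrow> R (g x) (g y)"
  proof -
    fix x y assume "R x y"
    then have xy: "x \<in> M" "y \<in> M" "{x, y} \<in> E" unfolding R_def induced_adj_def by auto
    then have "{g x, g y} \<in> E" using adj[of x y] M_def by blast
    then show "R (g x) (g y)" using gM xy unfolding R_def induced_adj_def by blast
  qed
  have RgS: "\<And>w. R\<^sup>*\<^sup>* u w \<Longrightarrow> R\<^sup>*\<^sup>* (g u) (g w)"
  proof -
    fix w assume "R\<^sup>*\<^sup>* u w"
    then show "R\<^sup>*\<^sup>* (g u) (g w)"
      by induction (auto intro: rtranclp.rtrancl_into_rtrancl Rg)
  qed
  have injC: "inj_on g C" using inj CV inj_on_subset by blast
  have dich: "D = C \<or> C \<inter> D = {}"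
  proof (cases "g u \<in> C")
    case True
    then have ug: "R\<^sup>*\<^sup>* u (g u)" using Cdef by simp
    have "g ` C \<subseteq> C"
    proof
      fix y assume "y \<in> g ` C"
      then obtain c where "c \<in> C" "y = g c" by auto
      then have "R\<^sup>*\<^sup>* (g u) y" using RgS Cdef by simp
      then show "y \<in> C" using ug Cdef by simp
    qed
    then have "g ` C = C" using endo_inj_surj[OF assms(5) _ injC] by simp
    then show ?thesis using D_def by simp
  next
    case False
    have "C \<inter> D = {}"
    proof (rule ccontr)
      assume "C \<inter> D \<noteq> {}"
      then obtain c where c: "c \<in> C" "g c \<in> C" using D_def by auto
      then have "R\<^sup>*\<^sup>* (g u) (g c)" using RgS Cdef by simp
      then have "R\<^sup>*\<^sup>* (g c) (g u)" using rtranclp_sym_rev Rsym by metis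
      moreover have "R\<^sup>*\<^sup>* u (g c)" using c Cdef by simp
      ultimately have "R\<^sup>*\<^sup>* u (g u)" by simp
      then show False using False Cdef by simp
    qed
    then show ?thesis by simp
  qed
  have F2: "\<And>c w. c \<in> C \<Longrightarrow> w \<in> V \<Longrightarrow> {g c, w} \<in> E \<Longrightarrow> w \<notin> D \<Longrightarrow> g w = w \<and> {c, w} \<in> E"
  proof -
    fix c w assume a: "c \<in> C" "w \<in> V" "{g c, w} \<in> E" "w \<notin> D"
    obtain w' where w': "w' \<in> V" "w = g w'" using a(2) gV by (metis imageE)
    have "{c, w'} \<in> E" using adj[of c w'] a w' CV by auto
    moreover have "w' \<notin> C" using a(4) w' D_def by auto
    ultimately have "g w' = w'" using F1 a(1) w'(1) by blast
    then show "g w = w \<and> {c, w} \<in> E" using w' \<open>{c, w'} \<in> E\<close> by simp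
  qed
  define h where "h = inv_into V g"
  have hg: "\<And>x. x \<in> V \<Longrightarrow> h (g x) = x" using inj h_def by (simp add: inv_into_f_f)
  define t where "t = (\<lambda>x. if x \<in> C then g x else if x \<in> D then h x else x)"
  have DV: "D \<subseteq> V" using CV gV D_def by auto
  have key: "\<And>x w. x \<in> C \<union> D \<Longrightarrow> w \<in> V \<Longrightarrow> w \<notin> C \<union> D \<Longrightarrow> ({t x, w} \<in> E \<longleftrightarrow> {x, w} \<in> E)"
  proof -
    fix x w assume a: "x \<in> C \<union> D" "w \<in> V" "w \<notin> C \<union> D"
    show "{t x, w} \<in> E \<longleftrightarrow> {x, w} \<in> E"
    proof (cases "x \<in> C")
      case True
      then have tx: "t x = g x" using t_def by simp
      show ?thesis
      proof
        assume "{t x, w} \<in> E" then show "{x, w} \<in> E" using F2[OF True a(2)] a(3) tx by auto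
      next
        assume e: "{x, w} \<in> E"
        then have "g w = w" using F1[OF True a(2)] a(3) by auto
        then show "{t x, w} \<in> E" using adj[of x w] e tx True CV a(2) by auto
      qed
    next
      case False
      then have xD: "x \<in> D" using a(1) by auto
      then obtain c where c: "c \<in> C" "x = g c" using D_def by auto
      have tx: "t x = c" using t_def False xD c hg CV by auto
      show ?thesis
      proof
        assume e: "{t x, w} \<in> E"
        then have "g w = w" using F1[OF c(1) a(2)] a(3) tx by auto
        then show "{x, w} \<in> E" using adj[of c w] e tx c CV a(2) by auto
      next
        assume "{x, w} \<in> E" then show "{t x, w} \<in> E" using F2[OF c(1) a(2)] a(3) tx c by auto
      qed
    qed
  qed
  have tout: "\<And>w. w \<notin> C \<union> D \<Longrightarrow> t w = w" using t_def by auto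
  have tCD: "\<And>x. x \<in> C \<union> D \<Longrightarrow> t x \<in> C \<union> D"
  proof -
    fix x assume x: "x \<in> C \<union> D"
    show "t x \<in> C \<union> D"
    proof (cases "x \<in> C")
      case True then have "t x = g x" using t_def by simp
      then show ?thesis using True D_def by blast
    next
      case False
      then have xD: "x \<in> D" using x by blast
      then obtain c where c: "c \<in> C" "x = g c" using D_def by blast
      have "t x = h x" using t_def False xD by simp
      also have "\<dots> = c" using hg c CV by blast
      finally show ?thesis using c by blast
    qed
  qed
  have inner: "\<And>x y. x \<in> C \<union> D \<Longrightarrow> y \<in> C \<union> D \<Longrightarrow> ({t x, t y} \<in> E \<longleftrightarrow> {x, y} \<in> E)"
  proof -
    fix x y assume x: "x \<in> C \<union> D" and y: "y \<in> C \<union> D"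
    show "{t x, t y} \<in> E \<longleftrightarrow> {x, y} \<in> E"
    proof (cases "D = C")
      case True
      then have "x \<in> C" "y \<in> C" "t x = g x" "t y = g y" using x y t_def by auto
      then show ?thesis using adj[of x y] CV by (metis subsetD)
    next
      case False
      then have disj: "C \<inter> D = {}" using dich by simp
      have noCD: "\<And>c d. c \<in> C \<Longrightarrow> d \<in> D \<Longrightarrow> {c, d} \<notin> E"
        using closure disj CM D_def gM by blast
      have tC: "\<And>c. c \<in> C \<Longrightarrow> t c = g c \<and> g c \<in> D" using t_def D_def by auto
      have tD: "\<And>c. c \<in> C \<Longrightarrow> t (g c) = c" using t_def D_def disj hg CV by auto
      show ?thesis
      proof (cases "x \<in> C")
        case xC: True
        show ?thesis
        proof (cases "y \<in> C")
          case True then show ?thesis using xC tC adj[of x y] CV by (metis subsetD)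
        next
          case False
          then obtain c where c: "c \<in> C" "y = g c" using y D_def by auto
          have "{x, y} \<notin> E" using noCD xC c D_def by auto
          moreover have "{t x, t y} \<notin> E" using noCD[of c "g x"] tC tD c xC by (auto simp: insert_commute)
          ultimately show ?thesis by simp
        qed
      next
        case xnC: False
        then obtain c where c: "c \<in> C" "x = g c" using x D_def by auto
        show ?thesis
        proof (cases "y \<in> C")
          case yC: True
          have "{x, y} \<notin> E" using noCD[of y x] yC c D_def by (auto simp: insert_commute)
          moreover have "{t x, t y} \<notin> E" using noCD[of c "g y"] tC tD c yC by auto
          ultimately show ?thesis by simp
        next
          case False
          then obtain c' where c': "c' \<in> C" "y = g c'" using y D_def by auto
          show ?thesis using adj[of c c'] c c' tD CV by auto
        qed
      qed
    qed
  qed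
  have tV: "\<And>x. x \<in> V \<Longrightarrow> t x \<in> V" using tCD tout CV DV by (metis Un_subset_iff subsetD)
  have adjt: "\<And>x y. x \<in> V \<Longrightarrow> y \<in> V \<Longrightarrow> ({x, y} \<in> E \<longleftrightarrow> {t x, t y} \<in> E)"
  proof -
    fix x y assume xV: "x \<in> V" and yV: "y \<in> V"
    show "{x, y} \<in> E \<longleftrightarrow> {t x, t y} \<in> E"
    proof (cases "x \<in> C \<union> D")
      case True
      show ?thesis
      proof (cases "y \<in> C \<union> D")
        case True then show ?thesis using inner \<open>x \<in> C \<union> D\<close> by auto
      next
        case False then show ?thesis using key[OF \<open>x \<in> C \<union> D\<close> yV] tout by auto
      qed
    next
      case xn: False
      show ?thesis
      proof (cases "y \<in> C \<union> D")
        case True then show ?thesis using key[OF True xV xn] tout[OF xn] by (auto simp: insert_commute)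
      next
        case False then show ?thesis using tout xn by auto
      qed
    qed
  qed
  have injt: "inj_on t V"
  proof (cases "D = C")
    case True
    have tx: "\<And>x. t x = (if x \<in> C then g x else x)" using t_def True by simp
    have gCC: "\<And>x. x \<in> C \<Longrightarrow> g x \<in> C" using True D_def by blast
    show ?thesis
    proof (rule inj_onI)
      fix x y assume xy: "x \<in> V" "y \<in> V" "t x = t y"
      show "x = y"
      proof (cases "x \<in> C")
        case xC: True
        show ?thesis
        proof (cases "y \<in> C")
          case True then show ?thesis using xC xy tx injC by (simp add: inj_on_def)
        next
          case False then show ?thesis using xC xy tx gCC by (metis)
        qed
      next
        case xC: False
        show ?thesis
        proof (cases "y \<in> C")
          case True then show ?thesis using xC xy tx gCC by (metis)
        next
          case False then show ?thesis using xC xy tx by simp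
        qed
      qed
    qed
  next
    case False
    then have disj: "C \<inter> D = {}" using dich by simp
    have tt: "\<And>x. t (t x) = x"
    proof -
      fix x show "t (t x) = x"
      proof (cases "x \<in> C")
        case True then show ?thesis using t_def disj D_def hg CV by auto
      next
        case nC: False
        show ?thesis
        proof (cases "x \<in> D")
          case True
          then obtain c where "c \<in> C" "x = g c" using D_def by auto
          then show ?thesis using t_def disj D_def hg CV by auto
        next
          case False then show ?thesis using t_def nC by auto
        qed
      qed
    qed
    show ?thesis by (metis inj_onI tt)
  qed
  have surjt: "t ` V = V"
  proof (cases "D = C")
    case True
    have "t ` V \<subseteq> V" using tV by auto
    moreover have "V \<subseteq> t ` V"
    proof
      fix v assume vV: "v \<in> V"
      show "v \<in> t ` V"
      proof (cases "v \<in> C")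
        case True
        then obtain c where "c \<in> C" "v = g c" using \<open>D = C\<close> D_def by auto
        then show ?thesis using t_def CV by (metis imageI subsetD)
      next
        case False then show ?thesis using t_def vV \<open>D = C\<close> by (metis Un_absorb image_iff tout)
      qed
    qed
    ultimately show ?thesis by auto
  next
    case False
    then have disj: "C \<inter> D = {}" using dich by simp
    have tt: "\<And>x. t (t x) = x"
    proof -
      fix x show "t (t x) = x"
      proof (cases "x \<in> C")
        case True then show ?thesis using t_def disj D_def hg CV by auto
      next
        case nC: False
        show ?thesis
        proof (cases "x \<in> D")
          case True
          then obtain c where "c \<in> C" "x = g c" using D_def by auto
          then show ?thesis using t_def disj D_def hg CV by auto
        next
          case False then show ?thesis using t_def nC by auto
        qed
      qed
    qed
    show ?thesis using tV tt by (metis image_subset_iff subsetI subset_antisym imageI)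
  qed
  have aut: "graph_aut V E t"
    unfolding graph_aut_def bij_betw_def using injt surjt adjt by auto
  have nontriv: "\<exists>v\<in>V. t v \<noteq> v" using uC uM M_def t_def by auto
  have degD: "\<And>c. c \<in> C \<Longrightarrow> degree_set V E (g c) \<subseteq> g ` degree_set V E c"
  proof
    fix c w assume c: "c \<in> C" and "w \<in> degree_set V E (g c)"
    then have wV: "w \<in> V" and e: "{g c, w} \<in> E" unfolding degree_set_def by auto
    obtain w' where w': "w' \<in> V" "w = g w'" using wV gV by (metis imageE)
    have "{c, w'} \<in> E" using adj[of c w'] e w' c CV by auto
    then show "w \<in> g ` degree_set V E c" using w' unfolding degree_set_def by auto
  qed
  have fin_deg: "\<And>x. x \<in> C \<union> D \<Longrightarrow> finite (degree_set V E x)"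
  proof -
    fix x assume "x \<in> C \<union> D"
    then show "finite (degree_set V E x)"
    proof
      assume "x \<in> C" then show ?thesis using nc by auto
    next
      assume "x \<in> D"
      then obtain c where "c \<in> C" "x = g c" using D_def by auto
      then show ?thesis using degD nc by (meson finite_imageI finite_subset)
    qed
  qed
  have "moved_edges E t \<subseteq> (\<Union>x\<in>C \<union> D. (\<lambda>w. {x, w}) ` degree_set V E x)"
  proof
    fix e assume "e \<in> moved_edges E t"
    then have eE: "e \<in> E" and mv: "t ` e \<noteq> e" unfolding moved_edges_def by auto
    obtain a b where ab: "e = {a, b}" using Ecard[OF eE] by (meson card_2_iff)
    have "e \<inter> (C \<union> D) \<noteq> {}"
    proof
      assume "e \<inter> (C \<union> D) = {}"
      then have "\<forall>x\<in>e. t x = x" using tout by auto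
      then show False using mv by auto
    qed
    then obtain x where x: "x \<in> e" "x \<in> C \<union> D" by auto
    obtain w where w: "e = {x, w}" using ab x(1) by (auto simp: insert_commute)
    have "w \<in> degree_set V E x" using w eE Esub[OF eE] unfolding degree_set_def by auto
    then show "e \<in> (\<Union>x\<in>C \<union> D. (\<lambda>w. {x, w}) ` degree_set V E x)" using x w by auto
  qed
  moreover have "finite (\<Union>x\<in>C \<union> D. (\<lambda>w. {x, w}) ` degree_set V E x)"
    using assms(5) fin_deg D_def by auto
  ultimately have "finite (moved_edges E t)" using finite_subset by blast
  then show False using assms(2) aut nontriv unfolding infinite_edge_motion_def by blast
qed

end
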